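(* Let $k_2=\frac{1}{8\cdot3^{2/3}}$. Then for every integer $\nu\ge1$, $c_\nu\ge\frac14+k_2\nu^{-2/3}$.
   Context: A weighted digraph $D=(V,A,w)$ is a digraph without loops or parallel arcs (opposite arcs allowed) with weights $w:A\to\mathbb{R}_{\ge0}$; $w(D)$ is the total arc weight. For a partition $(X,Y)$ of $V$, $w(X,Y)$ is the total weight of arcs from $X$ to $Y$, and $\mathrm{mac}(D)=\max_{(X,Y)}w(X,Y)$. For an integer $\nu\ge1$, $c_\nu$ is the supremum of reals $c\ge0$ such that every acyclic weighted digraph $D$ whose longest directed path has exactly $\nu$ vertices satisfies $\mathrm{mac}(D)\ge c\cdot w(D)$. *)

theory Defs
  imports Complex_Main "HOL-Library.Extended_Real"
begin

text \<open>A weighted digraph: finite vertex set V (vertices represented by naturals,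
  which is no loss of generality for finite digraphs), arc set A \<subseteq> V \<times> V
  without loops (parallel arcs are impossible since A is a set; opposite arcs allowed),
  and nonnegative weights w on the arcs.\<close>
definition weighted_digraph :: "nat set \<Rightarrow> (nat \<times> nat) set \<Rightarrow> (nat \<times> nat \<Rightarrow> real) \<Rightarrow> bool" where
  "weighted_digraph V A w \<longleftrightarrow> finite V \<and> A \<subseteq> V \<times> V \<and> (\<forall>v. (v, v) \<notin> A)
     \<and> (\<forall>a\<in>A. w a \<ge> 0)"

definition total_weight :: "(nat \<times> nat) set \<Rightarrow> (nat \<times> nat \<Rightarrow> real) \<Rightarrow> real" where
  "total_weight A w = (\<Sum>a\<in>A. w a)"

definition cut_weight :: "(nat \<times> nat) set \<Rightarrow> (nat \<times> nat \<Rightarrow> real) \<Rightarrow> nat set \<Rightarrow> nat set \<Rightarrow> real" where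
  "cut_weight A w X Y = (\<Sum>a\<in>A \<inter> (X \<times> Y). w a)"

definition mac :: "nat set \<Rightarrow> (nat \<times> nat) set \<Rightarrow> (nat \<times> nat \<Rightarrow> real) \<Rightarrow> real" where
  "mac V A w = Max {cut_weight A w X (V - X) | X. X \<subseteq> V}"

definition dpath :: "nat set \<Rightarrow> (nat \<times> nat) set \<Rightarrow> nat list \<Rightarrow> bool" where
  "dpath V A p \<longleftrightarrow> p \<noteq> [] \<and> distinct p \<and> set p \<subseteq> V
     \<and> (\<forall>i. Suc i < length p \<longrightarrow> (p ! i, p ! Suc i) \<in> A)"

definition longest_path_vertices :: "nat set \<Rightarrow> (nat \<times> nat) set \<Rightarrow> nat \<Rightarrow> bool" where
  "longest_path_vertices V A \<nu> \<longleftrightarrow>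
     (\<exists>p. dpath V A p \<and> length p = \<nu>) \<and> (\<forall>p. dpath V A p \<longrightarrow> length p \<le> \<nu>)"

text \<open>c_\<nu> as an extended real supremum (it is +\<infinity> e.g. for \<nu> = 1, where all weights vanish).\<close>
definition c_nu :: "nat \<Rightarrow> ereal" where
  "c_nu \<nu> = Sup {ereal c | c. c \<ge> 0 \<and>
     (\<forall>V A w. weighted_digraph V A w \<and> acyclic A \<and> longest_path_vertices V A \<nu>
        \<longrightarrow> mac V A w \<ge> c * total_weight A w)}"

definition k2 :: real where
  "k2 = 1 / (8 * 3 powr (2/3))"

end

theory Submission
  imports Defs "HOL-Library.FuncSet"
begin

lemma card_sub_out:
  assumes "finite B" "j \<in> B"
  shows "card {S. S \<subseteq> B \<and> card S = k \<and> j \<notin> S} = (card B - 1) choose k"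
proof -
  have "{S. S \<subseteq> B \<and> card S = k \<and> j \<notin> S} = {S. S \<subseteq> B - {j} \<and> card S = k}" by blast
  then show ?thesis using assms n_subsets[of "B - {j}" k] by simp
qed

lemma card_sub_in:
  assumes "finite B" "i \<in> B" "0 < k"
  shows "card {S. S \<subseteq> B \<and> card S = k \<and> i \<in> S} = (card B - 1) choose (k - 1)"
proof -
  let ?L = "{S. S \<subseteq> B - {i} \<and> card S = k - 1}"
  have eq: "{S. S \<subseteq> B \<and> card S = k \<and> i \<in> S} = insert i ` ?L"
  proof
    show "{S. S \<subseteq> B \<and> card S = k \<and> i \<in> S} \<subseteq> insert i ` ?L"
    proof
      fix S assume S: "S \<in> {S. S \<subseteq> B \<and> card S = k \<and> i \<in> S}"
      then have fS: "finite S" using assms(1) finite_subset by blast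
      have "S = insert i (S - {i})" using S by blast
      moreover have "S - {i} \<in> ?L" using S fS by auto
      ultimately show "S \<in> insert i ` ?L" by blast
    qed
  next
    show "insert i ` ?L \<subseteq> {S. S \<subseteq> B \<and> card S = k \<and> i \<in> S}"
    proof
      fix S assume "S \<in> insert i ` ?L"
      then obtain R where R: "R \<in> ?L" "S = insert i R" by blast
      have fR: "finite R" using R assms(1) finite_subset by blast
      have "i \<notin> R" using R by blast
      then have "card S = Suc (k - 1)" using R fR by simp
      then show "S \<in> {S. S \<subseteq> B \<and> card S = k \<and> i \<in> S}" using R assms by auto
    qed
  qed
  have inj: "inj_on (insert i) ?L"
    by (rule inj_onI) (metis Diff_insert_absorb Diff_iff mem_Collect_eq singletonI subset_iff)
  have "card (insert i ` ?L) = card ?L" using inj by (rule card_image)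
  also have "\<dots> = card (B - {i}) choose (k - 1)" using assms n_subsets[of "B - {i}"] by simp
  finally show ?thesis using eq assms by simp
qed

lemma card_sub_in_out:
  assumes "finite B" "i \<in> B" "j \<in> B" "i \<noteq> j" "0 < k"
  shows "card {S. S \<subseteq> B \<and> card S = k \<and> i \<in> S \<and> j \<notin> S} = (card B - 2) choose (k - 1)"
proof -
  have "{S. S \<subseteq> B \<and> card S = k \<and> i \<in> S \<and> j \<notin> S} = {S. S \<subseteq> B - {j} \<and> card S = k \<and> i \<in> S}" by blast
  moreover have "card (B - {j}) - 1 = card B - 2" using assms by simp
  ultimately show ?thesis using card_sub_in[of "B - {j}" i k] assms by simp
qed

lemma PiE_event1:
  assumes "finite A" "b \<in> A"
  shows "card {F \<in> PiE A B. P (F b)} * card (B b) = card (PiE A B) * card {S \<in> B b. P S}"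
proof -
  have "{F \<in> PiE A B. P (F b)} = PiE A (B(b := {S \<in> B b. P S}))"
    using assms(2) by (auto simp: PiE_def Pi_def)
  then have "card {F \<in> PiE A B. P (F b)} = (\<Prod>a\<in>A. card ((B(b := {S \<in> B b. P S})) a))"
    using assms(1) by (simp add: card_PiE)
  also have "\<dots> = card {S \<in> B b. P S} * (\<Prod>a\<in>A - {b}. card (B a))"
    using assms by (simp add: prod.remove)
  finally have 1: "card {F \<in> PiE A B. P (F b)} = card {S \<in> B b. P S} * (\<Prod>a\<in>A - {b}. card (B a))" .
  have 2: "card (PiE A B) = card (B b) * (\<Prod>a\<in>A - {b}. card (B a))"
    using assms by (simp add: card_PiE prod.remove)
  show ?thesis using 1 2 by simp
qed

lemma PiE_event2:
  assumes "finite A" "b \<in> A" "c \<in> A" "b \<noteq> c"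
  shows "card {F \<in> PiE A B. P (F b) \<and> Q (F c)} * (card (B b) * card (B c))
       = card (PiE A B) * (card {S \<in> B b. P S} * card {S \<in> B c. Q S})"
proof -
  have "{F \<in> PiE A B. P (F b) \<and> Q (F c)} = PiE A (B(b := {S \<in> B b. P S}, c := {S \<in> B c. Q S}))"
    using assms by (auto simp: PiE_def Pi_def)
  then have "card {F \<in> PiE A B. P (F b) \<and> Q (F c)} = (\<Prod>a\<in>A. card ((B(b := {S \<in> B b. P S}, c := {S \<in> B c. Q S})) a))"
    using assms(1) by (simp add: card_PiE)
  also have "\<dots> = card {S \<in> B b. P S} * (\<Prod>a\<in>A - {b}. card ((B(b := {S \<in> B b. P S}, c := {S \<in> B c. Q S})) a))"
    using assms by (subst prod.remove[of A b]) auto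
  also have "(\<Prod>a\<in>A - {b}. card ((B(b := {S \<in> B b. P S}, c := {S \<in> B c. Q S})) a))
      = card {S \<in> B c. Q S} * (\<Prod>a\<in>A - {b} - {c}. card ((B(b := {S \<in> B b. P S}, c := {S \<in> B c. Q S})) a))"
    using assms by (subst prod.remove[of "A - {b}" c]) auto
  also have "(\<Prod>a\<in>A - {b} - {c}. card ((B(b := {S \<in> B b. P S}, c := {S \<in> B c. Q S})) a)) = (\<Prod>a\<in>A - {b} - {c}. card (B a))"
    by (rule prod.cong) auto
  also have "card {S \<in> B b. P S} * (card {S \<in> B c. Q S} * (\<Prod>a\<in>A - {b} - {c}. card (B a))) = card {S \<in> B b. P S} * card {S \<in> B c. Q S} * (\<Prod>a\<in>A - {b} - {c}. card (B a))" by simp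
  finally have 1: "card {F \<in> PiE A B. P (F b) \<and> Q (F c)} = card {S \<in> B b. P S} * card {S \<in> B c. Q S} * (\<Prod>a\<in>A - {b} - {c}. card (B a))" .
  have 2: "card (PiE A B) = card (B b) * card (B c) * (\<Prod>a\<in>A - {b} - {c}. card (B a))"
  proof -
    have "card (PiE A B) = card (B b) * (\<Prod>a\<in>A - {b}. card (B a))"
      using assms by (simp add: card_PiE prod.remove)
    also have "(\<Prod>a\<in>A - {b}. card (B a)) = card (B c) * (\<Prod>a\<in>A - {b} - {c}. card (B a))"
      using assms by (subst prod.remove[of "A - {b}" c]) auto
    finally show ?thesis by simp
  qed
  show ?thesis using 1 2 by simp
qed

lemma ratio_lemma:
  fixes E Fm Y Z D K :: nat and c :: real
  assumes "E * Z = Fm * Y" "Y * D = K * Z" "0 < Z" "0 < D" "c * D \<le> K"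
  shows "c * Fm \<le> E"
proof -
  have "real E * Z * D = real Fm * K * Z"
    using assms(1,2) by (metis (mono_tags) mult.assoc mult.commute of_nat_mult)
  then have e: "real E * D = real Fm * K" using assms(3) by simp
  have "c * Fm * D = Fm * (c * D)" by simp
  also have "\<dots> \<le> Fm * K" using assms(5) by (simp add: mult_left_mono)
  also have "\<dots> = E * D" using e by simp
  finally show ?thesis using assms(4) by simp
qed

lemma binom_same:
  assumes "1 \<le> k" "k < n"
  shows "(n - 2 choose (k - 1)) * (n * (n - 1)) = (k * (n - k)) * (n choose k)"
proof -
  have a: "k * (n choose k) = n * ((n - 1) choose (k - 1))" using assms by (simp add: times_binomial_minus1_eq)
  have b: "((n - 1) - (k - 1)) * ((n - 1) choose (k - 1)) = (n - 1) * ((n - 1 - 1) choose (k - 1))"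
    by (rule binomial_absorb_comp)
  have c: "(n - 1) - (k - 1) = n - k" using assms by simp
  have d: "n - 1 - 1 = n - 2" by simp
  have "(k * (n - k)) * (n choose k) = (n - k) * (k * (n choose k))" by simp
  also have "\<dots> = n * ((n - k) * ((n - 1) choose (k - 1)))" using a by simp
  also have "\<dots> = n * ((n - 1) * (n - 2 choose (k - 1)))" using b c d by simp
  finally show ?thesis by simp
qed

lemma binom_in: "1 \<le> k \<Longrightarrow> k * (n choose k) = n * ((n - 1) choose (k - 1))"
  by (simp add: times_binomial_minus1_eq)

lemma game:
  fixes h T :: nat and c :: real
  defines "n \<equiv> 2 * h"
  defines "Blk \<equiv> \<lambda>b::nat. {b * n..<b * n + n}"
  defines "kb \<equiv> \<lambda>b::nat. h + T - b"
  defines "Sub \<equiv> \<lambda>b. {S. S \<subseteq> Blk b \<and> card S = kb b}"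
  defines "Fam \<equiv> PiE {..<2 * T + 1} Sub"
  assumes hT: "T + 1 \<le> h"
  assumes W: "c * (2 * real h * (2 * real h - 1)) \<le> real h ^ 2 - real T ^ 2"
  assumes X: "c * (4 * real h ^ 2) \<le> real h ^ 2 + real h - real T ^ 2 - real T"
  assumes ij: "i < j" "j < n * (2 * T + 1)"
  shows "c * card Fam \<le> card {F \<in> Fam. i \<in> F (i div n) \<and> j \<notin> F (j div n)}"
proof -
  have n2: "2 \<le> n" using hT n_def by simp
  have npos: "0 < n" using n2 by simp
  have finB: "\<And>b. finite (Blk b)" unfolding Blk_def by simp
  have cardB: "\<And>b. card (Blk b) = n" unfolding Blk_def by simp
  have inB: "x \<in> Blk (x div n)" for x
  proof -
    have "x div n * n + x mod n = x" by (rule div_mult_mod_eq)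
    moreover have "x mod n < n" using npos by simp
    ultimately show ?thesis unfolding Blk_def atLeastLessThan_iff by linarith
  qed
  have kb1: "\<And>b. b < 2 * T + 1 \<Longrightarrow> 1 \<le> kb b \<and> kb b < n" using hT unfolding kb_def n_def by auto
  have cardSub: "\<And>b. card (Sub b) = n choose kb b" unfolding Sub_def using n_subsets[OF finB] cardB by simp
  have Zpos: "\<And>b. b < 2 * T + 1 \<Longrightarrow> 0 < n choose kb b" using kb1 by (meson less_imp_le zero_less_binomial)
  have bi: "i div n < 2 * T + 1" and bj: "j div n < 2 * T + 1"
    using ij by (simp_all add: less_mult_imp_div_less mult.commute)
  have kreal: "\<And>b. b < 2 * T + 1 \<Longrightarrow> real (kb b) = real h + real T - real b"
    unfolding kb_def using hT by (simp add: of_nat_diff)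
  have nkreal: "\<And>b. b < 2 * T + 1 \<Longrightarrow> real (n - kb b) = real h - real T + real b"
  proof -
    fix b assume b: "b < 2 * T + 1"
    have "kb b \<le> n" using kb1[OF b] by simp
    then have "real (n - kb b) = real n - real (kb b)" by (simp add: of_nat_diff)
    then show "real (n - kb b) = real h - real T + real b" using kreal[OF b] n_def by simp
  qed
  show ?thesis
  proof (cases "i div n = j div n")
    case True
    define b where "b = i div n"
    have jb: "j div n = b" using True b_def by simp
    have evt: "{F \<in> Fam. i \<in> F (i div n) \<and> j \<notin> F (j div n)} = {F \<in> Fam. i \<in> F b \<and> j \<notin> F b}"
      using b_def jb by simp
    have e1: "card {F \<in> Fam. i \<in> F b \<and> j \<notin> F b} * card (Sub b) = card Fam * card {S \<in> Sub b. i \<in> S \<and> j \<notin> S}"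
      unfolding Fam_def using PiE_event1[of "{..<2 * T + 1}" b Sub "\<lambda>S. i \<in> S \<and> j \<notin> S"] bi b_def by simp
    have s2: "{S \<in> Sub b. i \<in> S \<and> j \<notin> S} = {S. S \<subseteq> Blk b \<and> card S = kb b \<and> i \<in> S \<and> j \<notin> S}"
      unfolding Sub_def by blast
    have c2: "card {S \<in> Sub b. i \<in> S \<and> j \<notin> S} = (n - 2) choose (kb b - 1)"
      using s2 card_sub_in_out[OF finB, of i b j "kb b"] inB[of i] inB[of j] b_def jb ij kb1[OF bi] cardB by simp
    have kk: "c * real (n * (n - 1)) \<le> real (kb b * (n - kb b))"
    proof -
      have "real (kb b * (n - kb b)) = (real h + real T - real b) * (real h - real T + real b)"
        using kreal[OF bi[folded b_def]] nkreal[OF bi[folded b_def]] by simp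
      also have "\<dots> = real h ^ 2 - (real T - real b) ^ 2" by (simp add: algebra_simps power2_eq_square)
      also have "\<dots> \<ge> real h ^ 2 - real T ^ 2"
      proof -
        have "b \<le> 2 * T" using bi b_def by simp
        then have "\<bar>real T - real b\<bar> \<le> real T" by linarith
        then have "(real T - real b) ^ 2 \<le> real T ^ 2"
          by (metis abs_ge_zero abs_of_nat power_mono power2_abs)
        then show ?thesis by simp
      qed
      finally have "real h ^ 2 - real T ^ 2 \<le> real (kb b * (n - kb b))" .
      moreover have "real (n * (n - 1)) = 2 * real h * (2 * real h - 1)" using n2 unfolding n_def by (simp add: of_nat_diff)
      ultimately show ?thesis using W by simp
    qed
    have "c * card Fam \<le> card {F \<in> Fam. i \<in> F b \<and> j \<notin> F b}"
      apply (rule ratio_lemma[where Z = "n choose kb b" and Y = "(n - 2) choose (kb b - 1)" and D = "n * (n - 1)" and K = "kb b * (n - kb b)"])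
      using e1 c2 cardSub apply simp
      using binom_same kb1[OF bi[folded b_def]] apply blast
      using Zpos bi b_def apply simp
      using n2 apply simp
      using kk by simp
    then show ?thesis using evt by simp
  next
    case False
    define b where "b = i div n"
    define d where "d = j div n"
    have bd: "b < d" using False ij b_def d_def by (simp add: div_le_mono order_le_neq_trans)
    have bm: "b < 2 * T + 1" "d < 2 * T + 1" using bi bj b_def d_def by auto
    have e1: "card {F \<in> Fam. i \<in> F b \<and> j \<notin> F d} * (card (Sub b) * card (Sub d))
       = card Fam * (card {S \<in> Sub b. i \<in> S} * card {S \<in> Sub d. j \<notin> S})"
      unfolding Fam_def using PiE_event2[of "{..<2 * T + 1}" b d Sub "\<lambda>S. i \<in> S" "\<lambda>S. j \<notin> S"] bm bd by simp
    have c1: "card {S \<in> Sub b. i \<in> S} = (n - 1) choose (kb b - 1)"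
    proof -
      have "{S \<in> Sub b. i \<in> S} = {S. S \<subseteq> Blk b \<and> card S = kb b \<and> i \<in> S}" unfolding Sub_def by blast
      then show ?thesis using card_sub_in[OF finB, of i b "kb b"] inB[of i] b_def kb1[OF bm(1)] cardB by simp
    qed
    have c2: "card {S \<in> Sub d. j \<notin> S} = (n - 1) choose (kb d)"
    proof -
      have "{S \<in> Sub d. j \<notin> S} = {S. S \<subseteq> Blk d \<and> card S = kb d \<and> j \<notin> S}" unfolding Sub_def by blast
      then show ?thesis using card_sub_out[OF finB, of j d "kb d"] inB[of j] d_def cardB by simp
    qed
    have kk: "c * real (n * n) \<le> real (kb b * (n - kb d))"
    proof -
      have e: "real (kb b * (n - kb d)) = (real h + real T - real b) * (real h - real T + real d)"
        using kreal[OF bm(1)] nkreal[OF bm(2)] by simp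
      have m: "(real h + real T - real b) * (real h - real T + real b + 1) \<le> (real h + real T - real b) * (real h - real T + real d)"
        using bd hT bm by (intro mult_left_mono) auto
      have q: "(real h + real T - real b) * (real h - real T + real b + 1)
          = real h ^ 2 + real h - (real T - real b) ^ 2 + (real T - real b)" by (simp add: algebra_simps power2_eq_square)
      have r: "real h ^ 2 + real h - real T ^ 2 - real T \<le> real h ^ 2 + real h - (real T - real b) ^ 2 + (real T - real b)"
      proof -
        have "b \<le> 2 * T" using bm by simp
        then have "\<bar>real T - real b\<bar> \<le> real T" by linarith
        then have "(real T - real b) ^ 2 \<le> real T ^ 2"
          by (metis abs_ge_zero abs_of_nat power_mono power2_abs)
        moreover have "real T - real b \<ge> - real T" using \<open>b \<le> 2 * T\<close> by linarith
        ultimately show ?thesis by linarith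
      qed
      have "real h ^ 2 + real h - real T ^ 2 - real T \<le> real (kb b * (n - kb d))" using e m q r by linarith
      moreover have "real (n * n) = 4 * real h ^ 2" unfolding n_def by (simp add: power2_eq_square)
      ultimately show ?thesis using X by simp
    qed
    have bin: "(((n - 1) choose (kb b - 1)) * ((n - 1) choose kb d)) * (n * n) = (kb b * (n - kb d)) * ((n choose kb b) * (n choose kb d))"
    proof -
      have a: "kb b * (n choose kb b) = n * ((n - 1) choose (kb b - 1))" using binom_in kb1[OF bm(1)] by blast
      have b: "(n - kb d) * (n choose kb d) = n * ((n - 1) choose kb d)" by (rule binomial_absorb_comp)
      have "(kb b * (n - kb d)) * ((n choose kb b) * (n choose kb d)) = (kb b * (n choose kb b)) * ((n - kb d) * (n choose kb d))"
        by (simp add: ac_simps)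
      also have "\<dots> = (((n - 1) choose (kb b - 1)) * ((n - 1) choose kb d)) * (n * n)" using a b by (simp add: ac_simps)
      finally show ?thesis by simp
    qed
    have "c * card Fam \<le> card {F \<in> Fam. i \<in> F b \<and> j \<notin> F d}"
      apply (rule ratio_lemma[where Z = "(n choose kb b) * (n choose kb d)" and Y = "((n - 1) choose (kb b - 1)) * ((n - 1) choose kb d)" and D = "n * n" and K = "kb b * (n - kb d)"])
      using e1 c1 c2 cardSub apply simp
      using bin apply simp
      using Zpos bm apply simp
      using npos apply simp
      using kk by simp
    then show ?thesis using b_def d_def by simp
  qed
qed

lemma g_cube:
  fixes \<nu> :: nat assumes "\<nu> \<ge> 1"
  shows "(k2 * real \<nu> powr (-2/3)) ^ 3 = 1 / (4608 * real \<nu> ^ 2)"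
proof -
  have a: "(3 powr (2/3) :: real) ^ 3 = 9" by (simp add: powr_power)
  have b: "(real \<nu> powr (-2/3)) ^ 3 = real \<nu> powr (-2)" using assms by (simp add: powr_power)
  have c: "real \<nu> powr (-2) = 1 / real \<nu> ^ 2" using assms by (simp add: powr_minus_divide)
  have "(k2 * real \<nu> powr (-2/3)) ^ 3 = k2 ^ 3 * (real \<nu> powr (-2/3)) ^ 3" by (simp add: power_mult_distrib)
  also have "k2 ^ 3 = 1 / (512 * 9)" unfolding k2_def using a by (simp add: power_divide power_mult_distrib)
  finally show ?thesis using b c by simp
qed

lemma g_le:
  fixes \<nu> :: nat and G :: real assumes "\<nu> \<ge> 1" "0 \<le> G" "1 \<le> 4608 * real \<nu> ^ 2 * G ^ 3"
  shows "k2 * real \<nu> powr (-2/3) \<le> G"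
proof (rule power_le_imp_le_base[where n = 2])
  have p: "0 < 4608 * real \<nu> ^ 2" using assms by simp
  have "(k2 * real \<nu> powr (-2/3)) ^ Suc 2 = 1 / (4608 * real \<nu> ^ 2)" using g_cube assms by simp
  also have "\<dots> \<le> G ^ 3" using assms(3) p by (simp add: divide_le_eq mult.commute)
  finally show "(k2 * real \<nu> powr (-2/3)) ^ Suc 2 \<le> G ^ Suc 2" by simp
qed (use assms in simp)

lemma key_ineq:
  fixes \<nu> T h :: nat
  assumes nu1: "\<nu> \<ge> 1" and T1: "64 * T ^ 3 \<le> \<nu>" and T2: "\<nu> < 64 * (T + 1) ^ 3"
    and h1: "\<nu> \<le> 2 * (2 * T + 1) * h" and h2: "2 * (2 * T + 1) * (h - 1) < \<nu>"
  shows "real h ^ 3 * (2 * real h - 1) ^ 3 \<le> 72 * real \<nu> ^ 2 * (real h - 2 * real T ^ 2) ^ 3"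
    and "real T + 1 \<le> real h" and "2 * real T + 1 \<le> real h" and "2 * real T ^ 2 \<le> real h"
proof -
  have hpos: "h \<ge> 1" using h1 nu1 by (cases h) auto
  have h2r: "2 * (2 * real T + 1) * (real h - 1) < real \<nu>"
  proof -
    have "real (2 * (2 * T + 1) * (h - 1)) < real \<nu>" using h2 by linarith
    moreover have "real (2 * (2 * T + 1) * (h - 1)) = 2 * (2 * real T + 1) * (real h - 1)"
      by (simp only: of_nat_mult of_nat_add of_nat_numeral of_nat_1 of_nat_diff[OF hpos])
    ultimately show ?thesis by simp
  qed
  have h1r: "real \<nu> \<le> 2 * (2 * real T + 1) * real h"
  proof -
    have "real \<nu> \<le> real (2 * (2 * T + 1) * h)" using h1 by linarith
    then show ?thesis by (simp add: algebra_simps)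
  qed
  have "real (64 * T ^ 3) \<le> real \<nu>" using T1 by (simp only: of_nat_le_iff)
  then have T1r: "64 * real T ^ 3 \<le> real \<nu>" by simp
  have "real \<nu> < real (64 * (T + 1) ^ 3)" using T2 by (simp only: of_nat_less_iff)
  then have T2r: "real \<nu> < 64 * (real T + 1) ^ 3" by (simp add: add.commute)
  have "(real h ^ 3 * (2 * real h - 1) ^ 3 \<le> 72 * real \<nu> ^ 2 * (real h - 2 * real T ^ 2) ^ 3)
     \<and> 2 * real T + 1 \<le> real h \<and> 2 * real T ^ 2 \<le> real h"
  proof (cases "T = 0")
    case True
    have "2 * h \<le> \<nu> + 1" using h2 True hpos by simp
    then have "real (2 * h) \<le> real (\<nu> + 1)" by (simp only: of_nat_le_iff)
    then have a: "2 * real h - 1 \<le> real \<nu>" by simp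
    have b: "real \<nu> < 64" using T2r True by simp
    have "(2 * real h - 1) ^ 3 \<le> real \<nu> ^ 3" using a hpos by (intro power_mono) auto
    also have "\<dots> = real \<nu> * real \<nu> ^ 2" by (simp add: power3_eq_cube power2_eq_square)
    also have "\<dots> \<le> 72 * real \<nu> ^ 2" using b by (intro mult_right_mono) auto
    finally have "real h ^ 3 * (2 * real h - 1) ^ 3 \<le> real h ^ 3 * (72 * real \<nu> ^ 2)"
      by (intro mult_left_mono) auto
    then show ?thesis using True hpos by (simp add: mult_ac)
  next
    case False
    then have T1': "real T \<ge> 1" by simp
    define s where "s = 2 * real T + 1"
    have spos: "s > 0" unfolding s_def by simp
    have "64 * real T ^ 3 \<le> 6 * real T * real h"
    proof -
      have "2 * (2 * real T + 1) * real h \<le> 6 * real T * real h" using T1' by (intro mult_right_mono) auto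
      then show ?thesis using T1r h1r by linarith
    qed
    then have "real T * (64 * real T ^ 2) \<le> real T * (6 * real h)" by (simp add: power3_eq_cube power2_eq_square mult_ac)
    then have a: "32 * real T ^ 2 \<le> 3 * real h" using T1' by simp
    have b: "real h - 2 * real T ^ 2 \<ge> 13 / 16 * real h" using a by simp
    have "20 * s \<le> real \<nu>"
    proof -
      have "60 * real T \<le> 64 * real T ^ 3"
      proof -
        have "real T * 1 \<le> real T * real T ^ 2" using T1' by (intro mult_left_mono) (auto simp: one_le_power)
        then show ?thesis by (simp add: power3_eq_cube power2_eq_square)
      qed
      then show ?thesis unfolding s_def using T1r T1' by simp
    qed
    then have c: "20 * s * real h \<le> 11 * real \<nu>" using h2r unfolding s_def by (simp add: algebra_simps)
    have d: "27 * real \<nu> \<le> 512 * s ^ 3"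
    proof -
      have "3 * (2 * real T + 2) \<le> 4 * s" unfolding s_def using T1' by simp
      then have "(3 * (2 * real T + 2)) ^ 3 \<le> (4 * s) ^ 3" by (intro power_mono) auto
      then have "27 * (8 * (real T + 1) ^ 3) \<le> 64 * s ^ 3" by (simp add: power_mult_distrib power3_eq_cube algebra_simps)
      then show ?thesis using T2r by linarith
    qed
    have e: "8000 * s ^ 3 * real h ^ 3 \<le> 1331 * real \<nu> ^ 3"
    proof -
      have "(20 * s * real h) ^ 3 \<le> (11 * real \<nu>) ^ 3" using c spos by (intro power_mono) auto
      then show ?thesis by (simp add: power_mult_distrib)
    qed
    have f: "216000 * real h ^ 3 \<le> 681472 * real \<nu> ^ 2"
    proof -
      have "27 * (8000 * s ^ 3 * real h ^ 3) \<le> 27 * (1331 * real \<nu> ^ 3)" using e by simp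
      also have "\<dots> = 1331 * real \<nu> ^ 2 * (27 * real \<nu>)" by (simp add: power3_eq_cube power2_eq_square)
      also have "\<dots> \<le> 1331 * real \<nu> ^ 2 * (512 * s ^ 3)" using d by (intro mult_left_mono) auto
      finally have "s ^ 3 * (216000 * real h ^ 3) \<le> s ^ 3 * (681472 * real \<nu> ^ 2)" by (simp add: mult_ac)
      then show ?thesis using spos by simp
    qed
    have g: "(13 / 16 * real h) ^ 3 \<le> (real h - 2 * real T ^ 2) ^ 3" using b hpos by (intro power_mono) auto
    have i: "(2 * real h - 1) ^ 3 \<le> (2 * real h) ^ 3" using hpos by (intro power_mono) auto
    have "real h ^ 3 * (2 * real h - 1) ^ 3 \<le> real h ^ 3 * (2 * real h) ^ 3" using i by (intro mult_left_mono) auto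
    also have "\<dots> = real h ^ 3 * (8 * real h ^ 3)" by (simp add: power_mult_distrib)
    also have "\<dots> \<le> real h ^ 3 * (72 * real \<nu> ^ 2 * (13 / 16) ^ 3)"
    proof (rule mult_left_mono)
      have ev: "(13/16::real)^3 = 2197/4096" by (simp add: power_divide)
      have nn: "0 \<le> real \<nu> ^ 2" by simp
      show "8 * real h ^ 3 \<le> 72 * real \<nu> ^ 2 * (13 / 16) ^ 3" unfolding ev using f nn by linarith
    qed simp
    also have "\<dots> = 72 * real \<nu> ^ 2 * (13 / 16 * real h) ^ 3" by (simp only: power_mult_distrib mult_ac)
    also have "\<dots> \<le> 72 * real \<nu> ^ 2 * (real h - 2 * real T ^ 2) ^ 3" using g by (intro mult_left_mono) auto
    finally have 1: "real h ^ 3 * (2 * real h - 1) ^ 3 \<le> 72 * real \<nu> ^ 2 * (real h - 2 * real T ^ 2) ^ 3" .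
    have 2: "2 * real T + 1 \<le> real h"
    proof -
      have "32 * real T ^ 2 \<ge> 32 * real T" using T1' by (simp add: power2_eq_square)
      then show ?thesis using a T1' by linarith
    qed
    show ?thesis using 1 2 a by simp
  qed
  then show "real h ^ 3 * (2 * real h - 1) ^ 3 \<le> 72 * real \<nu> ^ 2 * (real h - 2 * real T ^ 2) ^ 3"
    and "real T + 1 \<le> real h" and "2 * real T + 1 \<le> real h" and "2 * real T ^ 2 \<le> real h" by auto
qed

lemma params:
  fixes \<nu> :: nat
  assumes nu1: "\<nu> \<ge> 1"
  defines "c0 \<equiv> 1/4 + k2 * real \<nu> powr (-2/3)"
  shows "\<exists>h T. T + 1 \<le> h \<and> \<nu> \<le> 2 * h * (2 * T + 1)
     \<and> c0 * (2 * real h * (2 * real h - 1)) \<le> real h ^ 2 - real T ^ 2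
     \<and> c0 * (4 * real h ^ 2) \<le> real h ^ 2 + real h - real T ^ 2 - real T"
proof -
  define T where "T = (LEAST T. \<nu> < 64 * (T + 1) ^ 3)"
  have exT: "\<nu> < 64 * (\<nu> + 1) ^ 3"
  proof -
    have "\<nu> < \<nu> + 1" by simp
    also have "\<dots> \<le> (\<nu> + 1) ^ 3" by (simp add: self_le_power)
    also have "\<dots> \<le> 64 * (\<nu> + 1) ^ 3" by simp
    finally show ?thesis .
  qed
  have T2: "\<nu> < 64 * (T + 1) ^ 3" unfolding T_def by (rule LeastI[of _ \<nu>]) (rule exT)
  have T1: "64 * T ^ 3 \<le> \<nu>"
  proof (cases T)
    case 0 then show ?thesis by simp
  next
    case (Suc T')
    have "\<not> \<nu> < 64 * (T' + 1) ^ 3"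
    proof
      assume "\<nu> < 64 * (T' + 1) ^ 3"
      then have "T \<le> T'" unfolding T_def by (rule Least_le)
      then show False using Suc by simp
    qed
    then show ?thesis using Suc by simp
  qed
  define h where "h = (LEAST h. \<nu> \<le> 2 * (2 * T + 1) * h)"
  have h1: "\<nu> \<le> 2 * (2 * T + 1) * h" unfolding h_def by (rule LeastI[of _ \<nu>]) simp
  have hpos: "h \<ge> 1" using h1 nu1 by (cases h) auto
  have h2: "2 * (2 * T + 1) * (h - 1) < \<nu>"
  proof (rule ccontr)
    assume "\<not> 2 * (2 * T + 1) * (h - 1) < \<nu>"
    then have "h \<le> h - 1" unfolding h_def by (intro Least_le) simp
    then show False using hpos by simp
  qed
  note K = key_ineq[OF nu1 T1 T2 h1 h2]
  define x where "x = real h"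
  define t where "t = real T"
  have x1: "x \<ge> 1" using hpos x_def by simp
  have t0: "t \<ge> 0" using t_def by simp
  have Kx: "x ^ 3 * (2 * x - 1) ^ 3 \<le> 72 * real \<nu> ^ 2 * (x - 2 * t ^ 2) ^ 3"
    "t + 1 \<le> x" "2 * t + 1 \<le> x" "2 * t ^ 2 \<le> x" using K x_def t_def by auto
  define GB where "GB = (x - 2 * t ^ 2) / (4 * x * (2 * x - 1))"
  have den: "0 < 4 * x * (2 * x - 1)" using x1 by simp
  have GB0: "0 \<le> GB" unfolding GB_def using Kx(4) den by simp
  have "1 \<le> 4608 * real \<nu> ^ 2 * GB ^ 3"
  proof -
    have "GB ^ 3 = (x - 2 * t ^ 2) ^ 3 / (4 * x * (2 * x - 1)) ^ 3" unfolding GB_def by (simp add: power_divide)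
    also have "(4 * x * (2 * x - 1)) ^ 3 = 64 * (x ^ 3 * (2 * x - 1) ^ 3)" by (simp add: power_mult_distrib)
    finally have e: "GB ^ 3 = (x - 2 * t ^ 2) ^ 3 / (64 * (x ^ 3 * (2 * x - 1) ^ 3))" .
    have p: "0 < x ^ 3 * (2 * x - 1) ^ 3" using x1 by simp
    have "4608 * real \<nu> ^ 2 * GB ^ 3 = 72 * real \<nu> ^ 2 * (x - 2 * t ^ 2) ^ 3 / (x ^ 3 * (2 * x - 1) ^ 3)"
      unfolding e by simp
    also have "\<dots> \<ge> 1" using Kx(1) p by simp
    finally show ?thesis .
  qed
  then have g: "k2 * real \<nu> powr (-2/3) \<le> GB" using g_le nu1 GB0 by blast
  have W': "GB * (2 * x * (2 * x - 1)) = (x - 2 * t ^ 2) / 2"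
  proof -
    define D where "D = 2 * x * (2 * x - 1)"
    have Dp: "0 < D" using den D_def by simp
    have "GB = (x - 2 * t ^ 2) / (2 * D)" unfolding GB_def D_def by (simp add: mult_ac)
    then have "GB * D = (x - 2 * t ^ 2) / 2" using Dp by simp
    then show ?thesis using D_def by simp
  qed
  have X': "GB * (4 * x ^ 2) \<le> x - t - t ^ 2"
  proof -
    have "GB * (4 * x ^ 2) = (x - 2 * t ^ 2) * x / (2 * x - 1)"
      unfolding GB_def using den x1 by (simp add: field_simps power2_eq_square)
    also have "\<dots> \<le> x - t - t ^ 2"
    proof -
      have "(x - 2 * t ^ 2) * x \<le> (x - t - t ^ 2) * (2 * x - 1)"
      proof -
        have "x * (x - 1 - 2 * t) + t + t ^ 2 \<ge> 0" using Kx(3) x1 t0 by (simp add: mult_nonneg_nonneg)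
        then show ?thesis by (simp add: algebra_simps power2_eq_square)
      qed
      then show ?thesis using x1 by (simp add: divide_le_eq)
    qed
    finally show ?thesis .
  qed
  have gx: "0 \<le> 2 * x * (2 * x - 1)" "0 \<le> 4 * x ^ 2" using x1 by auto
  have Wf: "c0 * (2 * x * (2 * x - 1)) \<le> x ^ 2 - t ^ 2"
  proof -
    have "k2 * real \<nu> powr (-2/3) * (2 * x * (2 * x - 1)) \<le> GB * (2 * x * (2 * x - 1))"
      using g gx by (intro mult_right_mono) auto
    then show ?thesis unfolding c0_def W' by (simp add: algebra_simps power2_eq_square)
  qed
  have Xf: "c0 * (4 * x ^ 2) \<le> x ^ 2 + x - t ^ 2 - t"
  proof -
    have "k2 * real \<nu> powr (-2/3) * (4 * x ^ 2) \<le> GB * (4 * x ^ 2)"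
      using g gx by (intro mult_right_mono) auto
    then show ?thesis using X' unfolding c0_def by (simp add: algebra_simps power2_eq_square)
  qed
  have A1: "T + 1 \<le> h" using Kx(2) x_def t_def by linarith
  have A2: "\<nu> \<le> 2 * h * (2 * T + 1)" using h1 by (simp add: mult_ac)
  have A3: "c0 * (2 * real h * (2 * real h - 1)) \<le> real h ^ 2 - real T ^ 2" using Wf unfolding x_def t_def .
  have A4: "c0 * (4 * real h ^ 2) \<le> real h ^ 2 + real h - real T ^ 2 - real T" using Xf unfolding x_def t_def .
  show ?thesis by (rule exI[of _ h], rule exI[of _ T], intro conjI; fact)
qed

lemma dpath_reach:
  assumes "dpath V A p" "i + k < length p"
  shows "(p ! i, p ! (i + k)) \<in> A\<^sup>*"
  using assms(2)
proof (induction k)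
  case 0 then show ?case by simp
next
  case (Suc k)
  then have "(p ! i, p ! (i + k)) \<in> A\<^sup>*" by simp
  moreover have "(p ! (i + k), p ! Suc (i + k)) \<in> A" using assms(1) Suc.prems unfolding dpath_def by auto
  ultimately show ?case by simp
qed

lemma dpath_snoc:
  assumes wd: "weighted_digraph V A w" and ac: "acyclic A" and p: "dpath V A p"
    and uv: "(last p, v) \<in> A"
  shows "dpath V A (p @ [v])"
proof -
  have vV: "v \<in> V" using wd uv unfolding weighted_digraph_def by auto
  have vnot: "v \<notin> set p"
  proof
    assume "v \<in> set p"
    then obtain i where i: "i < length p" "p ! i = v" by (auto simp: in_set_conv_nth)
    have ne: "p \<noteq> []" using p unfolding dpath_def by simp
    have "(p ! i, p ! (i + (length p - 1 - i))) \<in> A\<^sup>*" using dpath_reach[OF p, of i "length p - 1 - i"] i by simp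
    moreover have "p ! (i + (length p - 1 - i)) = last p" using i ne by (simp add: last_conv_nth)
    ultimately have "(v, last p) \<in> A\<^sup>*" using i by simp
    then have "(v, v) \<in> A\<^sup>+" using uv by (rule rtrancl_into_trancl1)
    then show False using ac unfolding acyclic_def by blast
  qed
  have steps: "\<forall>i. Suc i < length (p @ [v]) \<longrightarrow> ((p @ [v]) ! i, (p @ [v]) ! Suc i) \<in> A"
  proof (intro allI impI)
    fix i assume i: "Suc i < length (p @ [v])"
    show "((p @ [v]) ! i, (p @ [v]) ! Suc i) \<in> A"
    proof (cases "Suc i < length p")
      case True
      then show ?thesis using p unfolding dpath_def by (simp add: nth_append)
    next
      case False
      then have e: "Suc i = length p" using i by simp
      have ne: "p \<noteq> []" using p unfolding dpath_def by simp
      have "i = length p - 1" using e by simp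
      then have "(p @ [v]) ! i = last p" using e ne by (simp add: nth_append last_conv_nth)
      moreover have "(p @ [v]) ! Suc i = v" using e by (simp add: nth_append)
      ultimately show ?thesis using uv by simp
    qed
  qed
  show ?thesis using p vnot vV steps unfolding dpath_def by auto
qed

lemma levels:
  assumes wd: "weighted_digraph V A w" and ac: "acyclic A" and lp: "longest_path_vertices V A \<nu>"
  shows "\<exists>f. (\<forall>v\<in>V. f v < \<nu>) \<and> (\<forall>u v. (u, v) \<in> A \<longrightarrow> f u < f v)"
proof -
  define P where "P = (\<lambda>v. {length p | p. dpath V A p \<and> last p = v})"
  define L where "L = (\<lambda>v. Max (P v))"
  have bound: "\<And>v. P v \<subseteq> {..\<nu>}" using lp unfolding P_def longest_path_vertices_def by auto
  have fin: "\<And>v. finite (P v)" using bound finite_subset by blast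
  have sing: "\<And>v. v \<in> V \<Longrightarrow> 1 \<in> P v"
  proof -
    fix v assume "v \<in> V"
    then have "dpath V A [v]" unfolding dpath_def by simp
    then show "1 \<in> P v" unfolding P_def by force
  qed
  have Lge: "\<And>v. v \<in> V \<Longrightarrow> 1 \<le> L v" unfolding L_def using sing fin by (meson Max_ge)
  have Lle: "\<And>v. v \<in> V \<Longrightarrow> L v \<le> \<nu>" unfolding L_def using sing fin bound
    by (metis Max_in atMost_iff empty_iff subsetD)
  have Lmono: "\<And>u v. (u, v) \<in> A \<Longrightarrow> L u < L v"
  proof -
    fix u v assume uv: "(u, v) \<in> A"
    have uV: "u \<in> V" and vV: "v \<in> V" using wd uv unfolding weighted_digraph_def by auto
    have "L u \<in> P u" unfolding L_def using sing[OF uV] fin[of u] by (intro Max_in) auto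
    then obtain p where p: "dpath V A p" "last p = u" "length p = L u" unfolding P_def by (auto simp: eq_commute)
    have "dpath V A (p @ [v])" using dpath_snoc[OF wd ac p(1)] p(2) uv by simp
    then have "length (p @ [v]) \<in> P v" unfolding P_def by force
    then have "length (p @ [v]) \<le> L v" unfolding L_def using fin by simp
    then show "L u < L v" using p(3) by simp
  qed
  define f where "f = (\<lambda>v. L v - 1)"
  have "\<forall>v\<in>V. f v < \<nu>" unfolding f_def using Lge Lle by force
  moreover have "\<forall>u v. (u, v) \<in> A \<longrightarrow> f u < f v"
  proof (intro allI impI)
    fix u v assume uv: "(u, v) \<in> A"
    have uV: "u \<in> V" using wd uv unfolding weighted_digraph_def by auto
    show "f u < f v" unfolding f_def using Lmono[OF uv] Lge[OF uV] by simp
  qed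
  ultimately show ?thesis by blast
qed

lemma cut_le_mac:
  assumes "finite V" "X \<subseteq> V"
  shows "cut_weight A w X (V - X) \<le> mac V A w"
proof -
  have "{cut_weight A w X (V - X) | X. X \<subseteq> V} = (\<lambda>X. cut_weight A w X (V - X)) ` Pow V" by auto
  then have "finite {cut_weight A w X (V - X) | X. X \<subseteq> V}" using assms(1) by simp
  then show ?thesis unfolding mac_def using assms(2) by (intro Max_ge) auto
qed

lemma avg_exists:
  fixes \<phi> :: "'a \<Rightarrow> real"
  assumes "finite S" "S \<noteq> {}" "real (card S) * t \<le> (\<Sum>x\<in>S. \<phi> x)"
  shows "\<exists>x\<in>S. t \<le> \<phi> x"
proof (rule ccontr)
  assume "\<not> (\<exists>x\<in>S. t \<le> \<phi> x)"
  then have "\<forall>x\<in>S. \<phi> x < t" by auto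
  then have "(\<Sum>x\<in>S. \<phi> x) < (\<Sum>x\<in>S. t)" using assms(1,2) by (intro sum_strict_mono) auto
  then show False using assms(3) by simp
qed

theorem mainTheorem15:
  fixes \<nu> :: nat
  assumes "\<nu> \<ge> 1"
  shows "c_nu \<nu> \<ge> ereal (1/4 + k2 * real \<nu> powr (-2/3))"
proof -
  define c0 where "c0 = 1/4 + k2 * real \<nu> powr (-2/3)"
  have k2pos: "0 < k2" unfolding k2_def by simp
  have c0pos: "0 \<le> c0" unfolding c0_def using k2pos by simp
  obtain h T where hT: "T + 1 \<le> h" "\<nu> \<le> 2 * h * (2 * T + 1)"
    "c0 * (2 * real h * (2 * real h - 1)) \<le> real h ^ 2 - real T ^ 2"
    "c0 * (4 * real h ^ 2) \<le> real h ^ 2 + real h - real T ^ 2 - real T"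
    using params[OF assms] unfolding c0_def by blast
  define Fam where "Fam = (\<Pi>\<^sub>E b\<in>{..<2 * T + 1}. {S. S \<subseteq> {b * (2 * h)..<b * (2 * h) + 2 * h} \<and> card S = h + T - b})"
  have G: "c0 * real (card Fam) \<le> real (card {F \<in> Fam. i \<in> F (i div (2 * h)) \<and> j \<notin> F (j div (2 * h))})"
    if "i < j" "j < 2 * h * (2 * T + 1)" for i j
    unfolding Fam_def using game[OF hT(1) hT(3) hT(4) that] .
  have finFam: "finite Fam" unfolding Fam_def by (intro finite_PiE) auto
  have neFam: "Fam \<noteq> {}"
  proof -
    have "{S. S \<subseteq> {b * (2 * h)..<b * (2 * h) + 2 * h} \<and> card S = h + T - b} \<noteq> {}" if "b < 2 * T + 1" for b
    proof -
      have "card {S. S \<subseteq> {b * (2 * h)..<b * (2 * h) + 2 * h} \<and> card S = h + T - b} = (2 * h) choose (h + T - b)"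
        using n_subsets[of "{b * (2 * h)..<b * (2 * h) + 2 * h}" "h + T - b"] by simp
      moreover have "0 < (2 * h) choose (h + T - b)" using hT(1) by simp
      ultimately show ?thesis by (metis card.empty less_irrefl)
    qed
    then show ?thesis unfolding Fam_def PiE_eq_empty_iff by auto
  qed
  have propc: "\<forall>V A w. weighted_digraph V A w \<and> acyclic A \<and> longest_path_vertices V A \<nu>
        \<longrightarrow> mac V A w \<ge> c0 * total_weight A w"
  proof (intro allI impI, elim conjE)
    fix V A w assume wd: "weighted_digraph V A w" and ac: "acyclic A" and lp: "longest_path_vertices V A \<nu>"
    obtain f where f: "\<forall>v\<in>V. f v < \<nu>" "\<forall>u v. (u, v) \<in> A \<longrightarrow> f u < f v"
      using levels[OF wd ac lp] by blast
    have finV: "finite V" and AV: "A \<subseteq> V \<times> V" and w0: "\<forall>a\<in>A. 0 \<le> w a"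
      using wd unfolding weighted_digraph_def by auto
    have finA: "finite A" using finV AV finite_subset by blast
    define X where "X = (\<lambda>F. {v \<in> V. f v \<in> F (f v div (2 * h))})"
    have cnt: "c0 * real (card Fam) \<le> real (card {F \<in> Fam. a \<in> X F \<times> (V - X F)})" if a: "a \<in> A" for a
    proof -
      obtain u v where uv: "a = (u, v)" by (cases a)
      have uV: "u \<in> V" "v \<in> V" using AV a uv by auto
      have "{F \<in> Fam. a \<in> X F \<times> (V - X F)} = {F \<in> Fam. f u \<in> F (f u div (2 * h)) \<and> f v \<notin> F (f v div (2 * h))}"
        using uv uV unfolding X_def by auto
      moreover have "f u < f v" using f(2) a uv by auto
      moreover have "f v < 2 * h * (2 * T + 1)" using f(1) uV hT(2) by fastforce
      ultimately show ?thesis using G by simp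
    qed
    have "(\<Sum>F\<in>Fam. cut_weight A w (X F) (V - X F))
        = (\<Sum>F\<in>Fam. \<Sum>a\<in>A. if a \<in> X F \<times> (V - X F) then w a else 0)"
      unfolding cut_weight_def using finA by (simp add: sum.inter_restrict)
    also have "\<dots> = (\<Sum>a\<in>A. \<Sum>F\<in>Fam. if a \<in> X F \<times> (V - X F) then w a else 0)"
      by (rule sum.swap)
    also have "\<dots> = (\<Sum>a\<in>A. w a * real (card {F \<in> Fam. a \<in> X F \<times> (V - X F)}))"
    proof (rule sum.cong)
      fix a assume "a \<in> A"
      have "(\<Sum>F\<in>Fam. if a \<in> X F \<times> (V - X F) then w a else 0) = (\<Sum>F\<in>{F \<in> Fam. a \<in> X F \<times> (V - X F)}. w a)"
        by (rule sum.inter_filter[OF finFam, symmetric])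
      then show "(\<Sum>F\<in>Fam. if a \<in> X F \<times> (V - X F) then w a else 0) = w a * real (card {F \<in> Fam. a \<in> X F \<times> (V - X F)})"
        by simp
    qed simp
    also have "\<dots> \<ge> (\<Sum>a\<in>A. w a * (c0 * real (card Fam)))"
      using cnt w0 by (intro sum_mono mult_left_mono) auto
    finally have S: "(\<Sum>a\<in>A. w a * (c0 * real (card Fam))) \<le> (\<Sum>F\<in>Fam. cut_weight A w (X F) (V - X F))" .
    have "(\<Sum>a\<in>A. w a * (c0 * real (card Fam))) = real (card Fam) * (c0 * total_weight A w)"
      unfolding total_weight_def by (simp add: sum_distrib_right sum_distrib_left mult_ac)
    then have "real (card Fam) * (c0 * total_weight A w) \<le> (\<Sum>F\<in>Fam. cut_weight A w (X F) (V - X F))"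
      using S by simp
    then obtain F where F: "F \<in> Fam" "c0 * total_weight A w \<le> cut_weight A w (X F) (V - X F)"
      using avg_exists[OF finFam neFam] by blast
    have "X F \<subseteq> V" unfolding X_def by auto
    then have "cut_weight A w (X F) (V - X F) \<le> mac V A w" using cut_le_mac finV by blast
    then show "mac V A w \<ge> c0 * total_weight A w" using F by simp
  qed
  have "ereal c0 \<in> {ereal c | c. c \<ge> 0 \<and>
     (\<forall>V A w. weighted_digraph V A w \<and> acyclic A \<and> longest_path_vertices V A \<nu>
        \<longrightarrow> mac V A w \<ge> c * total_weight A w)}"
    using c0pos propc by blast
  then have "ereal c0 \<le> c_nu \<nu>" unfolding c_nu_def by (rule Sup_upper)
  then show ?thesis unfolding c0_def .
qed

end
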